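(* Every left synchronous relation and every right synchronous relation over $\Sigma$ is realized by some transducer that is zero-avoiding with bound $0$. Moreover, both inclusions are proper: there is a relation realized by a transducer that is zero-avoiding with bound $0$ (for instance $(00/0)^*=\{0^{2i}/0^i : i\in\mathbb N_0\}$) which is neither left synchronous nor right synchronous.
   Context: A transducer is a quintuple $\mathcal T=(Q,\Sigma,E,I,F)$ with finite state set $Q$, finite alphabet $\Sigma$, finite transition set $E\subseteq Q\times\{x/y : x,y\in\Sigma\cup\{\lambda\}\}\times Q$ ($\lambda$ the empty word), nonempty initial set $I\subseteq Q$, final set $F\subseteq Q$. Paths, labels (concatenation of input parts / output parts), computations (empty or starting at an initial state) and accepting computations (empty with $I\cap F\neq\emptyset$, or nonempty ending at a final state) are as usual; $R(\mathcal T)$ is the set of labels of accepting computations. For a path $P$ with label $u/v$, $d(P)=|u|-|v|$, and $d_{max}(P)=\max\{|d(Q)| : Q\text{ a prefix of }P\}$. $\mathcal T$ is zero-avoiding with bound $k$ if for every computation $P$, $d_{max}(P)>k$ implies $d(P)\neq0$. A transducer is letter-to-letter if all its labels are $\sigma/\tau$ with $\sigma,\tau\in\Sigma$. The product of relations is $R_1R_2=\{u_1u_2/v_1v_2 : u_1/v_1\in R_1,\ u_2/v_2\in R_2\}$. A relation $R\subseteq\Sigma^*\times\Sigma^*$ is left synchronous if it is a finite union of relations each of the form $S(A\times\{\lambda\})$ or $S(\{\lambda\}\times A)$, where $A\subseteq\Sigma^*$ is regular and $S$ is realized by a letter-to-letter transducer; it is right synchronous if it is a finite union of relations each of the form $(A\times\{\lambda\})S$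 or $(\{\lambda\}\times A)S$ with $A,S$ as before. *)

theory Defs
  imports Main
begin

text \<open>Transitions: (source, (x, y), target), where None encodes the empty word lambda.\<close>
type_synonym ('q, 'a) edge = "'q \<times> ('a option \<times> 'a option) \<times> 'q"

record ('q, 'a) transducer =
  states :: "'q set"
  trans  :: "('q, 'a) edge set"
  init   :: "'q set"
  fin    :: "'q set"

definition transducer :: "'a set \<Rightarrow> ('q, 'a) transducer \<Rightarrow> bool" where
  "transducer \<Sigma> T \<longleftrightarrow>
     finite (states T) \<and> finite (trans T) \<and>
     (\<forall>(p, (x, y), q) \<in> trans T. p \<in> states T \<and> q \<in> states T \<and>
        set_option x \<subseteq> \<Sigma> \<and> set_option y \<subseteq> \<Sigma>) \<and>
     init T \<noteq> {} \<and> init T \<subseteq> states T \<and> fin T \<subseteq> states T"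

definition letter_to_letter :: "'a set \<Rightarrow> ('q, 'a) transducer \<Rightarrow> bool" where
  "letter_to_letter \<Sigma> T \<longleftrightarrow> transducer \<Sigma> T \<and>
     (\<forall>(p, (x, y), q) \<in> trans T. x \<noteq> None \<and> y \<noteq> None)"

definition src :: "('q, 'a) edge \<Rightarrow> 'q" where "src e = fst e"
definition tgt :: "('q, 'a) edge \<Rightarrow> 'q" where "tgt e = snd (snd e)"

definition olist :: "'a option \<Rightarrow> 'a list" where
  "olist x = (case x of None \<Rightarrow> [] | Some c \<Rightarrow> [c])"

definition is_path :: "('q, 'a) transducer \<Rightarrow> ('q, 'a) edge list \<Rightarrow> bool" where
  "is_path T es \<longleftrightarrow> set es \<subseteq> trans T \<and>
     (\<forall>i. Suc i < length es \<longrightarrow> tgt (es ! i) = src (es ! Suc i))"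

definition inp :: "('q, 'a) edge list \<Rightarrow> 'a list" where
  "inp es = concat (map (\<lambda>e. olist (fst (fst (snd e)))) es)"

definition outp :: "('q, 'a) edge list \<Rightarrow> 'a list" where
  "outp es = concat (map (\<lambda>e. olist (snd (fst (snd e)))) es)"

definition computation :: "('q, 'a) transducer \<Rightarrow> ('q, 'a) edge list \<Rightarrow> bool" where
  "computation T es \<longleftrightarrow> is_path T es \<and> (es = [] \<or> src (hd es) \<in> init T)"

definition accepting :: "('q, 'a) transducer \<Rightarrow> ('q, 'a) edge list \<Rightarrow> bool" where
  "accepting T es \<longleftrightarrow> computation T es \<and>
     ((es = [] \<and> init T \<inter> fin T \<noteq> {}) \<or> (es \<noteq> [] \<and> tgt (last es) \<in> fin T))"

definition rel :: "('q, 'a) transducer \<Rightarrow> ('a list \<times> 'a list) set" where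
  "rel T = {(inp es, outp es) | es. accepting T es}"

definition d :: "('q, 'a) edge list \<Rightarrow> int" where
  "d es = int (length (inp es)) - int (length (outp es))"

definition dmax :: "('q, 'a) edge list \<Rightarrow> int" where
  "dmax es = Max {\<bar>d (take i es)\<bar> | i. i \<le> length es}"

definition zero_avoiding :: "('q, 'a) transducer \<Rightarrow> nat \<Rightarrow> bool" where
  "zero_avoiding T k \<longleftrightarrow>
     (\<forall>es. computation T es \<longrightarrow> dmax es > int k \<longrightarrow> d es \<noteq> 0)"

definition rel_prod :: "('a list \<times> 'a list) set \<Rightarrow> ('a list \<times> 'a list) set \<Rightarrow> ('a list \<times> 'a list) set" where
  "rel_prod R1 R2 = {(u1 @ u2, v1 @ v2) | u1 v1 u2 v2. (u1, v1) \<in> R1 \<and> (u2, v2) \<in> R2}"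

fun nfa_steps :: "('s \<Rightarrow> 'a \<Rightarrow> 's set) \<Rightarrow> 's set \<Rightarrow> 'a list \<Rightarrow> 's set" where
  "nfa_steps \<delta> S [] = S"
| "nfa_steps \<delta> S (c # w) = nfa_steps \<delta> (\<Union>q\<in>S. \<delta> q c) w"

definition regular :: "'a set \<Rightarrow> 'a list set \<Rightarrow> bool" where
  "regular \<Sigma> A \<longleftrightarrow> (\<exists>(Q :: nat set) (\<delta> :: nat \<Rightarrow> 'a \<Rightarrow> nat set) I F.
     finite Q \<and> I \<subseteq> Q \<and> F \<subseteq> Q \<and> (\<forall>q\<in>Q. \<forall>c\<in>\<Sigma>. \<delta> q c \<subseteq> Q) \<and>
     A = {w. set w \<subseteq> \<Sigma> \<and> nfa_steps \<delta> I w \<inter> F \<noteq> {}})"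

definition synchronous_rel :: "'a set \<Rightarrow> ('a list \<times> 'a list) set \<Rightarrow> bool" where
  "synchronous_rel \<Sigma> S \<longleftrightarrow> (\<exists>T :: (nat, 'a) transducer. letter_to_letter \<Sigma> T \<and> rel T = S)"

definition left_piece :: "'a set \<Rightarrow> ('a list \<times> 'a list) set \<Rightarrow> bool" where
  "left_piece \<Sigma> X \<longleftrightarrow> (\<exists>S A. synchronous_rel \<Sigma> S \<and> regular \<Sigma> A \<and>
     (X = rel_prod S (A \<times> {[]}) \<or> X = rel_prod S ({[]} \<times> A)))"

definition right_piece :: "'a set \<Rightarrow> ('a list \<times> 'a list) set \<Rightarrow> bool" where
  "right_piece \<Sigma> X \<longleftrightarrow> (\<exists>S A. synchronous_rel \<Sigma> S \<and> regular \<Sigma> A \<and>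
     (X = rel_prod (A \<times> {[]}) S \<or> X = rel_prod ({[]} \<times> A) S))"

definition left_synchronous :: "'a set \<Rightarrow> ('a list \<times> 'a list) set \<Rightarrow> bool" where
  "left_synchronous \<Sigma> R \<longleftrightarrow> (\<exists>P. finite P \<and> (\<forall>X\<in>P. left_piece \<Sigma> X) \<and> R = \<Union>P)"

definition right_synchronous :: "'a set \<Rightarrow> ('a list \<times> 'a list) set \<Rightarrow> bool" where
  "right_synchronous \<Sigma> R \<longleftrightarrow> (\<exists>P. finite P \<and> (\<forall>X\<in>P. right_piece \<Sigma> X) \<and> R = \<Union>P)"

end

theory Submission
  imports Defs
begin


inductive reach :: "('q,'a) transducer \<Rightarrow> 'q \<Rightarrow> 'a list \<Rightarrow> 'a list \<Rightarrow> 'q \<Rightarrow> bool" for T where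
  r0: "reach T q [] [] q"
| rs: "(p, (x, y), q) \<in> trans T \<Longrightarrow> reach T q u v r \<Longrightarrow> reach T p (olist x @ u) (olist y @ v) r"

lemma reach_trans: "reach T p u v q \<Longrightarrow> reach T q u' v' r \<Longrightarrow> reach T p (u @ u') (v @ v') r"
  by (induction rule: reach.induct) (auto intro: reach.rs)

lemma is_path_Cons: "is_path T (e # es) \<longleftrightarrow> e \<in> trans T \<and> is_path T es \<and> (es \<noteq> [] \<longrightarrow> tgt e = src (hd es))"
proof
  assume h: "is_path T (e # es)"
  have "\<forall>i. Suc i < length es \<longrightarrow> tgt (es ! i) = src (es ! Suc i)"
  proof (intro allI impI)
    fix i assume "Suc i < length es"
    then show "tgt (es ! i) = src (es ! Suc i)" using h unfolding is_path_def
      by (metis Suc_less_eq length_Cons nth_Cons_Suc)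
  qed
  moreover have "es \<noteq> [] \<longrightarrow> tgt e = src (hd es)" using h unfolding is_path_def
    by (metis hd_conv_nth length_Cons length_greater_0_conv nth_Cons_0 nth_Cons_Suc Suc_less_eq)
  ultimately show "e \<in> trans T \<and> is_path T es \<and> (es \<noteq> [] \<longrightarrow> tgt e = src (hd es))"
    using h unfolding is_path_def by auto
next
  assume h: "e \<in> trans T \<and> is_path T es \<and> (es \<noteq> [] \<longrightarrow> tgt e = src (hd es))"
  show "is_path T (e # es)" unfolding is_path_def
  proof (intro conjI allI impI)
    show "set (e # es) \<subseteq> trans T" using h unfolding is_path_def by auto
  next
    fix i assume i: "Suc i < length (e # es)"
    show "tgt ((e # es) ! i) = src ((e # es) ! Suc i)"
    proof (cases i)
      case 0 then show ?thesis using h i by (simp add: hd_conv_nth)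
    next
      case (Suc j) then show ?thesis using h i unfolding is_path_def by auto
    qed
  qed
qed

lemma inp_Cons[simp]: "inp (e # es) = olist (fst (fst (snd e))) @ inp es" by (simp add: inp_def)
lemma outp_Cons[simp]: "outp (e # es) = olist (snd (fst (snd e))) @ outp es" by (simp add: outp_def)
lemma inp_Nil[simp]: "inp [] = []" by (simp add: inp_def)
lemma outp_Nil[simp]: "outp [] = []" by (simp add: outp_def)

lemma path_reach: "is_path T es \<Longrightarrow> es \<noteq> [] \<Longrightarrow> reach T (src (hd es)) (inp es) (outp es) (tgt (last es))"
proof (induction es)
  case Nil then show ?case by simp
next
  case (Cons e es)
  obtain p x y q where e: "e = (p, (x, y), q)" by (cases e) auto
  have et: "e \<in> trans T" and pe: "is_path T es" and lk: "es \<noteq> [] \<longrightarrow> tgt e = src (hd es)"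
    using Cons.prems is_path_Cons by blast+
  show ?case
  proof (cases "es = []")
    case True
    then show ?thesis using et e reach.rs[OF _ reach.r0, of p x y q T] by (simp add: src_def tgt_def)
  next
    case False
    then have "reach T q (inp es) (outp es) (tgt (last es))" using Cons.IH pe lk e by (simp add: tgt_def)
    then show ?thesis using et e False reach.rs[of p x y q T] by (simp add: src_def)
  qed
qed

lemma reach_path: "reach T p u v q \<Longrightarrow> \<exists>es. is_path T es \<and> inp es = u \<and> outp es = v \<and>
   ((es = [] \<and> p = q) \<or> (es \<noteq> [] \<and> src (hd es) = p \<and> tgt (last es) = q))"
proof (induction rule: reach.induct)
  case (r0 q) then show ?case by (intro exI[of _ "[]"]) (simp add: is_path_def)
next
  case (rs p x y q u v r)
  then obtain es where es: "is_path T es" "inp es = u" "outp es = v"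
    "(es = [] \<and> q = r) \<or> (es \<noteq> [] \<and> src (hd es) = q \<and> tgt (last es) = r)" by blast
  have "is_path T ((p, (x, y), q) # es)" using es rs(1) by (auto simp: is_path_Cons tgt_def)
  then show ?case using es by (intro exI[of _ "(p, (x, y), q) # es"]) (auto simp: src_def tgt_def)
qed

lemma rel_reach: "rel T = {(u, v). \<exists>p\<in>init T. \<exists>q\<in>fin T. reach T p u v q}"
proof (intro set_eqI iffI)
  fix w assume "w \<in> rel T"
  then obtain es where w: "w = (inp es, outp es)" and a: "accepting T es" by (auto simp: rel_def)
  show "w \<in> {(u, v). \<exists>p\<in>init T. \<exists>q\<in>fin T. reach T p u v q}"
  proof (cases "es = []")
    case True then show ?thesis using a w by (auto simp: accepting_def intro: reach.r0)
  next
    case False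
    then have "reach T (src (hd es)) (inp es) (outp es) (tgt (last es))"
      using a path_reach by (auto simp: accepting_def computation_def)
    then show ?thesis using a w False by (auto simp: accepting_def computation_def)
  qed
next
  fix w assume "w \<in> {(u, v). \<exists>p\<in>init T. \<exists>q\<in>fin T. reach T p u v q}"
  then obtain u v p q where w: "w = (u, v)" and pq: "p \<in> init T" "q \<in> fin T" and r: "reach T p u v q" by blast
  obtain es where es: "is_path T es" "inp es = u" "outp es = v"
    "(es = [] \<and> p = q) \<or> (es \<noteq> [] \<and> src (hd es) = p \<and> tgt (last es) = q)"
    using reach_path[OF r] by blast
  have "accepting T es" using es pq by (auto simp: accepting_def computation_def)
  then show "w \<in> rel T" using es w unfolding rel_def by blast
qed




definition weight :: "('q, 'a) edge \<Rightarrow> int" where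
  "weight e = int (length (olist (fst (fst (snd e))))) - int (length (olist (snd (fst (snd e)))))"

definition good_sign :: "('q, 'a) transducer \<Rightarrow> ('q \<Rightarrow> int) \<Rightarrow> bool" where
  "good_sign T sg \<longleftrightarrow> (\<forall>e\<in>trans T. (sg (src e) = 1 \<or> sg (src e) = -1) \<and> sg (tgt e) = sg (src e)
      \<and> (weight e = 0 \<or> weight e = sg (src e)))"

lemma d_sum: "d es = sum_list (map weight es)"
  by (induction es) (auto simp: d_def weight_def)

lemma d_append: "d (xs @ ys) = d xs + d ys" by (simp add: d_sum)

lemma nonneg_sum: "(\<forall>e\<in>set xs. 0 \<le> s * weight e) \<Longrightarrow> 0 \<le> s * d xs"
  by (induction xs) (auto simp: d_sum distrib_left)

lemma path_sign: assumes "is_path T es" "good_sign T sg" "i < length es"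
  shows "sg (src (es ! i)) = sg (src (es ! 0))"
  using assms(3)
proof (induction i)
  case 0 then show ?case by simp
next
  case (Suc i)
  have "es ! i \<in> trans T" using assms(1) Suc.prems unfolding is_path_def by auto
  then have "sg (tgt (es ! i)) = sg (src (es ! i))" using assms(2) unfolding good_sign_def by blast
  moreover have "tgt (es ! i) = src (es ! Suc i)" using assms(1) Suc.prems unfolding is_path_def by auto
  ultimately show ?case using Suc by simp
qed

lemma good_sign_za: assumes "good_sign T sg" shows "zero_avoiding T k"
  unfolding zero_avoiding_def
proof (intro allI impI)
  fix es assume c: "computation T es" and dm: "dmax es > int k"
  have p: "is_path T es" using c by (simp add: computation_def)
  let ?S = "{\<bar>d (take i es)\<bar> | i. i \<le> length es}"
  have "?S = (\<lambda>i. \<bar>d (take i es)\<bar>) ` {..length es}" by auto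
  then have fin: "finite ?S" by simp
  have ne: "?S \<noteq> {}" by auto
  have "dmax es \<in> ?S" unfolding dmax_def using Max_in[OF fin ne] .
  then obtain i where i: "i \<le> length es" "\<bar>d (take i es)\<bar> > 0" using dm by auto
  then have nen: "es \<noteq> []" by (auto simp: d_def)
  define s where "s = sg (src (es ! 0))"
  have s1: "s = 1 \<or> s = -1" using assms p nen unfolding good_sign_def s_def is_path_def
    by (metis length_greater_0_conv nth_mem subset_code(1))
  have all: "\<forall>e\<in>set es. 0 \<le> s * weight e"
  proof
    fix e assume "e \<in> set es"
    then obtain j where j: "j < length es" "e = es ! j" by (metis in_set_conv_nth)
    have "e \<in> trans T" using p j unfolding is_path_def by auto
    then have "weight e = 0 \<or> weight e = sg (src e)" using assms unfolding good_sign_def by blast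
    moreover have "sg (src e) = s" using path_sign[OF p assms j(1)] j s_def by simp
    ultimately show "0 \<le> s * weight e" using s1 by auto
  qed
  have es: "es = take i es @ drop i es" by simp
  have a1: "0 \<le> s * d (take i es)" using all nonneg_sum[of "take i es" s] by (meson in_set_takeD)
  have a2: "0 \<le> s * d (drop i es)" using all nonneg_sum[of "drop i es" s] by (meson in_set_dropD)
  have "d es = d (take i es) + d (drop i es)" using d_append es by metis
  then show "d es \<noteq> 0" using a1 a2 s1 i(2) by auto
qed




definition pre_td :: "'a set \<Rightarrow> ('q, 'a) transducer \<Rightarrow> bool" where
  "pre_td \<Sigma> T \<longleftrightarrow>
     finite (states T) \<and> finite (trans T) \<and>
     (\<forall>p x y q. (p, (x, y), q) \<in> trans T \<longrightarrow> p \<in> states T \<and> q \<in> states T \<and>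
        set_option x \<subseteq> \<Sigma> \<and> set_option y \<subseteq> \<Sigma>) \<and>
     init T \<subseteq> states T \<and> fin T \<subseteq> states T"

definition emap :: "('q \<Rightarrow> 'r) \<Rightarrow> ('q, 'a) edge \<Rightarrow> ('r, 'a) edge" where
  "emap f e = (f (fst e), fst (snd e), f (snd (snd e)))"

lemma emap_simp[simp]: "emap f (p, l, q) = (f p, l, f q)" by (simp add: emap_def)

lemma mem_emap: "(a, l, b) \<in> emap f ` S \<longleftrightarrow> (\<exists>p q. (p, l, q) \<in> S \<and> a = f p \<and> b = f q)"
proof
  assume "(a, l, b) \<in> emap f ` S"
  then obtain e where "e \<in> S" "(a, l, b) = emap f e" by blast
  then show "\<exists>p q. (p, l, q) \<in> S \<and> a = f p \<and> b = f q" by (cases e) auto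
next
  assume "\<exists>p q. (p, l, q) \<in> S \<and> a = f p \<and> b = f q"
  then obtain p q where "(p, l, q) \<in> S" "a = f p" "b = f q" by blast
  then show "(a, l, b) \<in> emap f ` S" using image_eqI[of "(a, l, b)" "emap f" "(p, l, q)" S] by simp
qed

definition rename :: "('q \<Rightarrow> 'r) \<Rightarrow> ('q, 'a) transducer \<Rightarrow> ('r, 'a) transducer" where
  "rename f T = \<lparr>states = f ` states T, trans = emap f ` trans T, init = f ` init T, fin = f ` fin T\<rparr>"

lemma reach_rename1: assumes "inj f" shows "reach (rename f T) p u v q \<Longrightarrow> reach T (inv f p) u v (inv f q)"
proof (induction rule: reach.induct)
  case (r0 q) then show ?case by (rule reach.r0)
next
  case (rs p x y q u v r)
  then obtain p0 q0 where "(p0, (x, y), q0) \<in> trans T" "p = f p0" "q = f q0"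
    by (auto simp: rename_def emap_def)
  then show ?case using rs assms reach.rs[of p0 x y q0 T] by (simp add: inv_f_f)
qed

lemma reach_rename2: "reach T p u v q \<Longrightarrow> reach (rename f T) (f p) u v (f q)"
proof (induction rule: reach.induct)
  case (r0 q) then show ?case by (rule reach.r0)
next
  case (rs p x y q u v r)
  have "(f p, (x, y), f q) \<in> trans (rename f T)" using rs(1) by (force simp: rename_def)
  then show ?case using rs reach.rs by metis
qed

lemma rel_rename: assumes "inj f" shows "rel (rename f T) = rel T"
proof -
  have "\<And>u v. (\<exists>p\<in>init (rename f T). \<exists>q\<in>fin (rename f T). reach (rename f T) p u v q) \<longleftrightarrow>
               (\<exists>p\<in>init T. \<exists>q\<in>fin T. reach T p u v q)"
  proof
    fix u v assume "\<exists>p\<in>init (rename f T). \<exists>q\<in>fin (rename f T). reach (rename f T) p u v q"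
    then obtain p q where "p \<in> init T" "q \<in> fin T" "reach (rename f T) (f p) u v (f q)"
      by (auto simp: rename_def)
    then show "\<exists>p\<in>init T. \<exists>q\<in>fin T. reach T p u v q"
      using reach_rename1[OF assms] assms by (metis inv_f_f)
  next
    fix u v assume "\<exists>p\<in>init T. \<exists>q\<in>fin T. reach T p u v q"
    then show "\<exists>p\<in>init (rename f T). \<exists>q\<in>fin (rename f T). reach (rename f T) p u v q"
      using reach_rename2 by (fastforce simp: rename_def)
  qed
  then show ?thesis by (simp add: rel_reach)
qed

lemma pre_td_rename: "pre_td \<Sigma> T \<Longrightarrow> pre_td \<Sigma> (rename f T)"
  unfolding pre_td_def rename_def by (auto simp: emap_def; meson option.set_intros subsetD)

lemma good_sign_rename: "inj f \<Longrightarrow> good_sign T sg \<Longrightarrow> good_sign (rename f T) (sg \<circ> inv f)"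
  unfolding good_sign_def rename_def by (auto simp: emap_def src_def tgt_def weight_def inv_f_f)

definition tunion :: "('q, 'a) transducer \<Rightarrow> ('r, 'a) transducer \<Rightarrow> ('q + 'r, 'a) transducer" where
  "tunion T1 T2 = \<lparr>states = Inl ` states T1 \<union> Inr ` states T2,
     trans = emap Inl ` trans T1 \<union> emap Inr ` trans T2,
     init = Inl ` init T1 \<union> Inr ` init T2, fin = Inl ` fin T1 \<union> Inr ` fin T2\<rparr>"

lemma reach_tunion1: "reach (tunion T1 T2) p u v q \<Longrightarrow>
  (\<forall>p0. p = Inl p0 \<longrightarrow> (\<exists>q0. q = Inl q0 \<and> reach T1 p0 u v q0)) \<and>
  (\<forall>p0. p = Inr p0 \<longrightarrow> (\<exists>q0. q = Inr q0 \<and> reach T2 p0 u v q0))"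
proof (induction rule: reach.induct)
  case (r0 q) then show ?case by (auto intro: reach.r0)
next
  case (rs p x y q u v r)
  from rs(1) consider (a) p0 q0 where "(p0, (x, y), q0) \<in> trans T1" "p = Inl p0" "q = Inl q0"
    | (b) p0 q0 where "(p0, (x, y), q0) \<in> trans T2" "p = Inr p0" "q = Inr q0"
    by (auto simp: tunion_def mem_emap)
  then show ?case
  proof cases
    case a then show ?thesis using rs(3) by (auto intro: reach.rs)
  next
    case b then show ?thesis using rs(3) by (auto intro: reach.rs)
  qed
qed

lemma reach_tunion2: "reach T1 p u v q \<Longrightarrow> reach (tunion T1 T2) (Inl p) u v (Inl q)"
proof (induction rule: reach.induct)
  case (r0 q) then show ?case by (rule reach.r0)
next
  case (rs p x y q u v r)
  have "(Inl p, (x, y), Inl q) \<in> trans (tunion T1 T2)" using rs(1) by (auto simp: tunion_def mem_emap)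
  then show ?case using rs reach.rs by metis
qed

lemma reach_tunion3: "reach T2 p u v q \<Longrightarrow> reach (tunion T1 T2) (Inr p) u v (Inr q)"
proof (induction rule: reach.induct)
  case (r0 q) then show ?case by (rule reach.r0)
next
  case (rs p x y q u v r)
  have "(Inr p, (x, y), Inr q) \<in> trans (tunion T1 T2)" using rs(1) by (auto simp: tunion_def mem_emap)
  then show ?case using rs reach.rs by metis
qed

lemma rel_tunion: "rel (tunion T1 T2) = rel T1 \<union> rel T2"
proof -
  have "\<And>u v. (\<exists>p\<in>init (tunion T1 T2). \<exists>q\<in>fin (tunion T1 T2). reach (tunion T1 T2) p u v q) \<longleftrightarrow>
     (\<exists>p\<in>init T1. \<exists>q\<in>fin T1. reach T1 p u v q) \<or> (\<exists>p\<in>init T2. \<exists>q\<in>fin T2. reach T2 p u v q)"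
  proof
    fix u v assume "\<exists>p\<in>init (tunion T1 T2). \<exists>q\<in>fin (tunion T1 T2). reach (tunion T1 T2) p u v q"
    then obtain p q where pq: "p \<in> init (tunion T1 T2)" "q \<in> fin (tunion T1 T2)" "reach (tunion T1 T2) p u v q" by blast
    note h = reach_tunion1[OF pq(3)]
    show "(\<exists>p\<in>init T1. \<exists>q\<in>fin T1. reach T1 p u v q) \<or> (\<exists>p\<in>init T2. \<exists>q\<in>fin T2. reach T2 p u v q)"
    proof (cases p)
      case (Inl p0)
      then obtain q0 where q0: "q = Inl q0" "reach T1 p0 u v q0" using h by blast
      have "p0 \<in> init T1" using pq(1) Inl by (auto simp: tunion_def)
      moreover have "q0 \<in> fin T1" using pq(2) q0 by (auto simp: tunion_def)
      ultimately show ?thesis using q0 by blast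
    next
      case (Inr p0)
      then obtain q0 where q0: "q = Inr q0" "reach T2 p0 u v q0" using h by blast
      have "p0 \<in> init T2" using pq(1) Inr by (auto simp: tunion_def)
      moreover have "q0 \<in> fin T2" using pq(2) q0 by (auto simp: tunion_def)
      ultimately show ?thesis using q0 by blast
    qed
  next
    fix u v assume "(\<exists>p\<in>init T1. \<exists>q\<in>fin T1. reach T1 p u v q) \<or> (\<exists>p\<in>init T2. \<exists>q\<in>fin T2. reach T2 p u v q)"
    then show "\<exists>p\<in>init (tunion T1 T2). \<exists>q\<in>fin (tunion T1 T2). reach (tunion T1 T2) p u v q"
    proof
      assume "\<exists>p\<in>init T1. \<exists>q\<in>fin T1. reach T1 p u v q"
      then obtain p q where "p \<in> init T1" "q \<in> fin T1" "reach T1 p u v q" by blast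
      moreover have "Inl p \<in> init (tunion T1 T2)" "Inl q \<in> fin (tunion T1 T2)"
        using calculation by (auto simp: tunion_def)
      moreover have "reach (tunion T1 T2) (Inl p) u v (Inl q)" by (rule reach_tunion2) fact
      ultimately show ?thesis by blast
    next
      assume "\<exists>p\<in>init T2. \<exists>q\<in>fin T2. reach T2 p u v q"
      then obtain p q where "p \<in> init T2" "q \<in> fin T2" "reach T2 p u v q" by blast
      moreover have "Inr p \<in> init (tunion T1 T2)" "Inr q \<in> fin (tunion T1 T2)"
        using calculation by (auto simp: tunion_def)
      moreover have "reach (tunion T1 T2) (Inr p) u v (Inr q)" by (rule reach_tunion3) fact
      ultimately show ?thesis by blast
    qed
  qed
  then show ?thesis by (auto simp: rel_reach)
qed

lemma pre_td_tunion: "pre_td \<Sigma> T1 \<Longrightarrow> pre_td \<Sigma> T2 \<Longrightarrow> pre_td \<Sigma> (tunion T1 T2)"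
  unfolding pre_td_def tunion_def by (auto simp: emap_def; meson option.set_intros subsetD)

lemma good_sign_tunion: "good_sign T1 s1 \<Longrightarrow> good_sign T2 s2 \<Longrightarrow> good_sign (tunion T1 T2) (case_sum s1 s2)"
  unfolding good_sign_def tunion_def by (auto simp: emap_def src_def tgt_def weight_def)

definition tconc :: "('q, 'a) transducer \<Rightarrow> ('r, 'a) transducer \<Rightarrow> ('q + 'r, 'a) transducer" where
  "tconc T1 T2 = \<lparr>states = Inl ` states T1 \<union> Inr ` states T2,
     trans = emap Inl ` trans T1 \<union> emap Inr ` trans T2 \<union>
       (\<lambda>(p, q). (Inl p, (None, None), Inr q)) ` (fin T1 \<times> init T2),
     init = Inl ` init T1, fin = Inr ` fin T2\<rparr>"

lemma reach_tconc_r: "reach (tconc T1 T2) p u v q \<Longrightarrow> p = Inr p0 \<Longrightarrow> \<exists>q0. q = Inr q0 \<and> reach T2 p0 u v q0"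
proof (induction arbitrary: p0 rule: reach.induct)
  case (r0 q) then show ?case by (auto intro: reach.r0)
next
  case (rs p x y q u v r)
  then obtain q0 where "(p0, (x, y), q0) \<in> trans T2" "q = Inr q0"
    by (auto simp: tconc_def mem_emap)
  then show ?case using rs by (auto intro: reach.rs)
qed

lemma reach_tconc_l: "reach (tconc T1 T2) p u v q \<Longrightarrow> p = Inl p0 \<Longrightarrow>
  (\<exists>q0. q = Inl q0 \<and> reach T1 p0 u v q0) \<or>
  (\<exists>q0 u1 v1 u2 v2 f i. q = Inr q0 \<and> u = u1 @ u2 \<and> v = v1 @ v2 \<and> reach T1 p0 u1 v1 f \<and>
      f \<in> fin T1 \<and> i \<in> init T2 \<and> reach T2 i u2 v2 q0)"
proof (induction arbitrary: p0 rule: reach.induct)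
  case (r0 q) then show ?case by (auto intro: reach.r0)
next
  case (rs p x y q u v r)
  from rs(1) rs(4) consider (a) q0 where "(p0, (x, y), q0) \<in> trans T1" "q = Inl q0"
    | (b) i where "p0 \<in> fin T1" "i \<in> init T2" "q = Inr i" "x = None" "y = None"
    by (auto simp: tconc_def mem_emap)
  then show ?case
  proof cases
    case a
    from rs(3)[OF a(2)] show ?thesis
    proof
      assume "\<exists>q1. r = Inl q1 \<and> reach T1 q0 u v q1"
      then show ?thesis using a(1) by (auto intro: reach.rs)
    next
      assume "\<exists>q1 u1 v1 u2 v2 f i. r = Inr q1 \<and> u = u1 @ u2 \<and> v = v1 @ v2 \<and> reach T1 q0 u1 v1 f \<and>
         f \<in> fin T1 \<and> i \<in> init T2 \<and> reach T2 i u2 v2 q1"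
      then obtain q1 u1 v1 u2 v2 f i where h: "r = Inr q1" "u = u1 @ u2" "v = v1 @ v2" "reach T1 q0 u1 v1 f"
         "f \<in> fin T1" "i \<in> init T2" "reach T2 i u2 v2 q1" by blast
      have "reach T1 p0 (olist x @ u1) (olist y @ v1) f" using a(1) h(4) by (rule reach.rs)
      show ?thesis
        apply (rule disjI2)
        apply (rule exI[of _ q1], rule exI[of _ "olist x @ u1"], rule exI[of _ "olist y @ v1"], rule exI[of _ u2],
               rule exI[of _ v2], rule exI[of _ f], rule exI[of _ i])
        using h \<open>reach T1 p0 (olist x @ u1) (olist y @ v1) f\<close> by simp
    qed
  next
    case b
    obtain q1 where "r = Inr q1" "reach T2 i u v q1" using reach_tconc_r[OF rs(2) b(3)] by blast
    then show ?thesis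
      apply (intro disjI2)
      apply (rule exI[of _ q1], rule exI[of _ "[]"], rule exI[of _ "[]"], rule exI[of _ u],
               rule exI[of _ v], rule exI[of _ p0], rule exI[of _ i])
      using b by (simp add: olist_def reach.r0)
  qed
qed

lemma reach_tconc_1: "reach T1 p u v q \<Longrightarrow> reach (tconc T1 T2) (Inl p) u v (Inl q)"
proof (induction rule: reach.induct)
  case (r0 q) then show ?case by (rule reach.r0)
next
  case (rs p x y q u v r)
  have "(Inl p, (x, y), Inl q) \<in> trans (tconc T1 T2)" using rs(1) by (auto simp: tconc_def mem_emap)
  then show ?case using rs reach.rs by metis
qed

lemma reach_tconc_2: "reach T2 p u v q \<Longrightarrow> reach (tconc T1 T2) (Inr p) u v (Inr q)"
proof (induction rule: reach.induct)
  case (r0 q) then show ?case by (rule reach.r0)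
next
  case (rs p x y q u v r)
  have "(Inr p, (x, y), Inr q) \<in> trans (tconc T1 T2)" using rs(1) by (auto simp: tconc_def mem_emap)
  then show ?case using rs reach.rs by metis
qed

lemma rel_tconc: "rel (tconc T1 T2) = rel_prod (rel T1) (rel T2)"
proof (intro set_eqI iffI)
  fix w assume "w \<in> rel (tconc T1 T2)"
  then obtain u v p q where w: "w = (u, v)" and pq: "p \<in> init T1" "q \<in> fin T2"
    "reach (tconc T1 T2) (Inl p) u v (Inr q)" by (auto simp: rel_reach tconc_def)
  from reach_tconc_l[OF pq(3) refl] obtain u1 v1 u2 v2 f i where h: "u = u1 @ u2" "v = v1 @ v2"
    "reach T1 p u1 v1 f" "f \<in> fin T1" "i \<in> init T2" "reach T2 i u2 v2 q" by auto
  have "(u1, v1) \<in> rel T1" using h pq by (auto simp: rel_reach)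
  moreover have "(u2, v2) \<in> rel T2" using h pq by (auto simp: rel_reach)
  ultimately show "w \<in> rel_prod (rel T1) (rel T2)" using w h by (auto simp: rel_prod_def)
next
  fix w assume "w \<in> rel_prod (rel T1) (rel T2)"
  then obtain u1 v1 u2 v2 where w: "w = (u1 @ u2, v1 @ v2)" "(u1, v1) \<in> rel T1" "(u2, v2) \<in> rel T2"
    by (auto simp: rel_prod_def)
  then obtain p f i q where h: "p \<in> init T1" "f \<in> fin T1" "reach T1 p u1 v1 f"
    "i \<in> init T2" "q \<in> fin T2" "reach T2 i u2 v2 q" by (auto simp: rel_reach)
  have e: "(Inl f, (None, None), Inr i) \<in> trans (tconc T1 T2)" using h by (force simp: tconc_def)
  have "reach (tconc T1 T2) (Inl f) (olist None @ u2) (olist None @ v2) (Inr q)"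
    using reach.rs[OF e reach_tconc_2[OF h(6)]] .
  then have "reach (tconc T1 T2) (Inl f) u2 v2 (Inr q)" by (simp add: olist_def)
  then have "reach (tconc T1 T2) (Inl p) (u1 @ u2) (v1 @ v2) (Inr q)"
    using reach_trans[OF reach_tconc_1[OF h(3)]] by blast
  then show "w \<in> rel (tconc T1 T2)" using w h by (auto simp: rel_reach tconc_def)
qed

lemma pre_td_tconc: assumes "pre_td \<Sigma> T1" "pre_td \<Sigma> T2" shows "pre_td \<Sigma> (tconc T1 T2)"
proof -
  have f1: "finite (fin T1 \<times> init T2)" using assms unfolding pre_td_def by (meson finite_SigmaI finite_subset)
  have e: "p \<in> states (tconc T1 T2) \<and> q \<in> states (tconc T1 T2) \<and> set_option x \<subseteq> \<Sigma> \<and> set_option y \<subseteq> \<Sigma>"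
    if "(p, (x, y), q) \<in> trans (tconc T1 T2)" for p x y q
  proof -
    from that consider (a) p0 q0 where "(p0, (x, y), q0) \<in> trans T1" "p = Inl p0" "q = Inl q0"
      | (b) p0 q0 where "(p0, (x, y), q0) \<in> trans T2" "p = Inr p0" "q = Inr q0"
      | (c) p0 q0 where "p0 \<in> fin T1" "q0 \<in> init T2" "p = Inl p0" "q = Inr q0" "x = None" "y = None"
      unfolding tconc_def by (auto simp: mem_emap)
    then show ?thesis
    proof cases
      case a then show ?thesis using assms(1) unfolding pre_td_def by (auto simp: tconc_def)
    next
      case b then show ?thesis using assms(2) unfolding pre_td_def by (auto simp: tconc_def)
    next
      case c then show ?thesis using assms unfolding pre_td_def by (auto simp: tconc_def)
    qed
  qed
  have fs: "finite (states (tconc T1 T2))" using assms unfolding pre_td_def by (simp add: tconc_def)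
  have ft: "finite (trans (tconc T1 T2))" using assms f1 unfolding pre_td_def by (simp add: tconc_def)
  have "init (tconc T1 T2) \<subseteq> states (tconc T1 T2)" "fin (tconc T1 T2) \<subseteq> states (tconc T1 T2)"
    using assms unfolding pre_td_def by (auto simp: tconc_def)
  then show ?thesis using fs ft e unfolding pre_td_def by blast
qed

lemma good_sign_tconc: "good_sign T1 (\<lambda>_. s) \<Longrightarrow> good_sign T2 (\<lambda>_. s) \<Longrightarrow> s = 1 \<or> s = -1 \<Longrightarrow>
   good_sign (tconc T1 T2) (\<lambda>_. s)"
  unfolding good_sign_def tconc_def by (auto simp: emap_def src_def tgt_def weight_def olist_def)




definition lab :: "bool \<Rightarrow> 'a \<Rightarrow> 'a option \<times> 'a option" where
  "lab b c = (if b then (Some c, None) else (None, Some c))"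
definition pr :: "bool \<Rightarrow> 'a list \<Rightarrow> 'a list \<times> 'a list" where
  "pr b w = (if b then (w, []) else ([], w))"

definition nfa_td :: "bool \<Rightarrow> 'a set \<Rightarrow> nat set \<Rightarrow> (nat \<Rightarrow> 'a \<Rightarrow> nat set) \<Rightarrow> nat set \<Rightarrow> nat set \<Rightarrow> (nat, 'a) transducer" where
  "nfa_td b \<Sigma> Q \<delta> I F = \<lparr>states = Q, trans = {(p, lab b c, q) | p c q. p \<in> Q \<and> c \<in> \<Sigma> \<and> q \<in> \<delta> p c \<and> q \<in> Q},
     init = I, fin = F\<rparr>"

lemma nfa_sel[simp]: "states (nfa_td b \<Sigma> Q \<delta> I F) = Q" "init (nfa_td b \<Sigma> Q \<delta> I F) = I"
  "fin (nfa_td b \<Sigma> Q \<delta> I F) = F" by (simp_all add: nfa_td_def)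

lemma nfa_trans: "(p, l, q) \<in> trans (nfa_td b \<Sigma> Q \<delta> I F) \<longleftrightarrow> (\<exists>c. l = lab b c \<and> p \<in> Q \<and> c \<in> \<Sigma> \<and> q \<in> \<delta> p c \<and> q \<in> Q)"
  by (auto simp: nfa_td_def)

lemma nfa_steps_union: "nfa_steps \<delta> S w = (\<Union>p\<in>S. nfa_steps \<delta> {p} w)"
proof (induction w arbitrary: S)
  case Nil then show ?case by simp
next
  case (Cons c w)
  have "nfa_steps \<delta> S (c # w) = (\<Union>p\<in>(\<Union>q\<in>S. \<delta> q c). nfa_steps \<delta> {p} w)"
    using Cons.IH[of "\<Union>q\<in>S. \<delta> q c"] by simp
  also have "\<dots> = (\<Union>q\<in>S. \<Union>p\<in>\<delta> q c. nfa_steps \<delta> {p} w)" by blast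
  also have "\<dots> = (\<Union>q\<in>S. nfa_steps \<delta> {q} (c # w))"
  proof (rule SUP_cong[OF refl])
    fix q show "(\<Union>p\<in>\<delta> q c. nfa_steps \<delta> {p} w) = nfa_steps \<delta> {q} (c # w)"
      using Cons.IH[of "\<delta> q c"] by simp
  qed
  finally show ?case .
qed

lemma reach_nfa1: "reach (nfa_td b \<Sigma> Q \<delta> I F) p u v q \<Longrightarrow>
   \<exists>w. (u, v) = pr b w \<and> set w \<subseteq> \<Sigma> \<and> q \<in> nfa_steps \<delta> {p} w"
proof (induction rule: reach.induct)
  case (r0 q) then show ?case by (intro exI[of _ "[]"]) (simp add: pr_def)
next
  case (rs p x y q u v r)
  obtain c where c: "(x, y) = lab b c" "c \<in> \<Sigma>" "q \<in> \<delta> p c" using rs(1) unfolding nfa_trans by blast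
  obtain w where w: "(u, v) = pr b w" "set w \<subseteq> \<Sigma>" "r \<in> nfa_steps \<delta> {q} w" using rs(3) by blast
  have "r \<in> nfa_steps \<delta> {p} (c # w)" using w(3) c(3) nfa_steps_union[of \<delta> "\<delta> p c" w] by auto
  moreover have "(olist x @ u, olist y @ v) = pr b (c # w)" using c(1) w(1)
    by (cases b) (auto simp: lab_def pr_def olist_def)
  ultimately show ?case using w(2) c(2) by (intro exI[of _ "c # w"]) auto
qed

lemma reach_nfa2: assumes cl: "\<forall>q\<in>Q. \<forall>c\<in>\<Sigma>. \<delta> q c \<subseteq> Q"
  shows "set w \<subseteq> \<Sigma> \<Longrightarrow> p \<in> Q \<Longrightarrow> q \<in> nfa_steps \<delta> {p} w \<Longrightarrow>
    reach (nfa_td b \<Sigma> Q \<delta> I F) p (fst (pr b w)) (snd (pr b w)) q"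
proof (induction w arbitrary: p)
  case Nil then show ?case by (simp add: pr_def reach.r0)
next
  case (Cons c w)
  have "q \<in> nfa_steps \<delta> (\<delta> p c) w" using Cons by simp
  then obtain q' where q': "q' \<in> \<delta> p c" "q \<in> nfa_steps \<delta> {q'} w" using nfa_steps_union[of \<delta> "\<delta> p c" w] by auto
  have cS: "c \<in> \<Sigma>" using Cons by simp
  have "q' \<in> Q" using cl Cons.prems(2) cS q'(1) by blast
  then have r: "reach (nfa_td b \<Sigma> Q \<delta> I F) q' (fst (pr b w)) (snd (pr b w)) q" using Cons q' by simp
  have e: "(p, (fst (lab b c), snd (lab b c)), q') \<in> trans (nfa_td b \<Sigma> Q \<delta> I F)"
    using Cons.prems(2) cS q'(1) \<open>q' \<in> Q\<close> unfolding nfa_trans by auto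
  have "reach (nfa_td b \<Sigma> Q \<delta> I F) p (olist (fst (lab b c)) @ fst (pr b w)) (olist (snd (lab b c)) @ snd (pr b w)) q"
    by (rule reach.rs[OF e r])
  moreover have "olist (fst (lab b c)) @ fst (pr b w) = fst (pr b (c # w))"
     "olist (snd (lab b c)) @ snd (pr b w) = snd (pr b (c # w))"
    by (cases b; simp add: lab_def pr_def olist_def)+
  ultimately show ?case by simp
qed

lemma rel_nfa: assumes cl: "\<forall>q\<in>Q. \<forall>c\<in>\<Sigma>. \<delta> q c \<subseteq> Q" and IQ: "I \<subseteq> Q"
  shows "rel (nfa_td b \<Sigma> Q \<delta> I F) = pr b ` {w. set w \<subseteq> \<Sigma> \<and> nfa_steps \<delta> I w \<inter> F \<noteq> {}}"
proof (intro set_eqI iffI)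
  fix z assume "z \<in> rel (nfa_td b \<Sigma> Q \<delta> I F)"
  then obtain u v p q where z: "z = (u, v)" "p \<in> I" "q \<in> F" "reach (nfa_td b \<Sigma> Q \<delta> I F) p u v q"
    by (auto simp: rel_reach)
  obtain w where w: "(u, v) = pr b w" "set w \<subseteq> \<Sigma>" "q \<in> nfa_steps \<delta> {p} w" using reach_nfa1[OF z(4)] by blast
  have "q \<in> nfa_steps \<delta> I w" using w(3) z(2) nfa_steps_union[of \<delta> I w] by auto
  then show "z \<in> pr b ` {w. set w \<subseteq> \<Sigma> \<and> nfa_steps \<delta> I w \<inter> F \<noteq> {}}" using z w by auto
next
  fix z assume "z \<in> pr b ` {w. set w \<subseteq> \<Sigma> \<and> nfa_steps \<delta> I w \<inter> F \<noteq> {}}"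
  then obtain w q where w: "z = pr b w" "set w \<subseteq> \<Sigma>" "q \<in> nfa_steps \<delta> I w" "q \<in> F" by blast
  then obtain p where p: "p \<in> I" "q \<in> nfa_steps \<delta> {p} w" using nfa_steps_union[of \<delta> I w] by auto
  have "reach (nfa_td b \<Sigma> Q \<delta> I F) p (fst (pr b w)) (snd (pr b w)) q"
    using reach_nfa2[OF cl w(2) _ p(2)] p(1) IQ by blast
  then show "z \<in> rel (nfa_td b \<Sigma> Q \<delta> I F)" using w p unfolding rel_reach by (cases "pr b w") auto
qed

lemma pre_td_nfa: assumes "finite Q" "\<forall>q\<in>Q. \<forall>c\<in>\<Sigma>. \<delta> q c \<subseteq> Q" "I \<subseteq> Q" "F \<subseteq> Q" "finite \<Sigma>"
  shows "pre_td \<Sigma> (nfa_td b \<Sigma> Q \<delta> I F)"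
proof -
  have "trans (nfa_td b \<Sigma> Q \<delta> I F) \<subseteq> Q \<times> (lab b ` \<Sigma>) \<times> Q" by (auto simp: nfa_trans)
  moreover have "finite (Q \<times> (lab b ` \<Sigma>) \<times> Q)" using assms by simp
  ultimately have ft: "finite (trans (nfa_td b \<Sigma> Q \<delta> I F))" by (rule finite_subset)
  have e: "p \<in> Q \<and> q \<in> Q \<and> set_option x \<subseteq> \<Sigma> \<and> set_option y \<subseteq> \<Sigma>"
    if t: "(p, (x, y), q) \<in> trans (nfa_td b \<Sigma> Q \<delta> I F)" for p x y q
  proof -
    obtain c where c: "(x, y) = lab b c" "p \<in> Q" "c \<in> \<Sigma>" "q \<in> Q" using t unfolding nfa_trans by blast
    then show ?thesis by (cases b) (auto simp: lab_def)
  qed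
  show ?thesis using ft e assms unfolding pre_td_def by simp
qed

lemma good_sign_nfa: "good_sign (nfa_td b \<Sigma> Q \<delta> I F) (\<lambda>_. if b then 1 else -1)"
  unfolding good_sign_def by (cases b) (auto simp: nfa_trans lab_def weight_def olist_def src_def tgt_def)

lemma pr_True: "pr True ` A = A \<times> {[]}" by (auto simp: pr_def)
lemma pr_False: "pr False ` A = {[]} \<times> A" by (auto simp: pr_def)

lemma edge_of_transducer: "transducer \<Sigma> T \<Longrightarrow> (p, (x, y), q) \<in> trans T \<Longrightarrow>
    p \<in> states T \<and> q \<in> states T \<and> set_option x \<subseteq> \<Sigma> \<and> set_option y \<subseteq> \<Sigma>"
  unfolding transducer_def by (drule conjunct2, drule conjunct2, drule conjunct1, drule bspec) auto

lemma transducer_pre: assumes t: "transducer \<Sigma> T" shows "pre_td \<Sigma> T"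
proof -
  have e: "\<forall>p x y q. (p, (x, y), q) \<in> trans T \<longrightarrow> p \<in> states T \<and> q \<in> states T \<and> set_option x \<subseteq> \<Sigma> \<and> set_option y \<subseteq> \<Sigma>"
    using edge_of_transducer[OF t] by blast
  have f: "finite (states T) \<and> finite (trans T) \<and> init T \<subseteq> states T \<and> fin T \<subseteq> states T"
    using t unfolding transducer_def by (elim conjE) (intro conjI; assumption)
  show ?thesis unfolding pre_td_def using e f by (elim conjE) (intro conjI; assumption)
qed

lemma pre_transducer: assumes "pre_td \<Sigma> T" "init T \<noteq> {}" shows "transducer \<Sigma> T"
proof -
  have "\<forall>e\<in>trans T. case e of (p, (x, y), q) \<Rightarrow> p \<in> states T \<and> q \<in> states T \<and>
        set_option x \<subseteq> \<Sigma> \<and> set_option y \<subseteq> \<Sigma>"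
  proof
    fix e assume "e \<in> trans T"
    moreover obtain p x y q where "e = (p, (x, y), q)" by (cases e) auto
    ultimately show "case e of (p, (x, y), q) \<Rightarrow> p \<in> states T \<and> q \<in> states T \<and>
        set_option x \<subseteq> \<Sigma> \<and> set_option y \<subseteq> \<Sigma>" using assms(1) unfolding pre_td_def by simp
  qed
  then show ?thesis using assms unfolding pre_td_def transducer_def by blast
qed

lemma l2l_edge: "letter_to_letter \<Sigma> T \<Longrightarrow> (p, (x, y), q) \<in> trans T \<Longrightarrow> x \<noteq> None \<and> y \<noteq> None"
  unfolding letter_to_letter_def by (drule conjunct2, drule bspec) auto

lemma good_sign_l2l: assumes l: "letter_to_letter \<Sigma> T" and s: "s = 1 \<or> s = -1" shows "good_sign T (\<lambda>_. s)"
  unfolding good_sign_def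
proof (intro ballI conjI)
  fix e assume e: "e \<in> trans T"
  obtain p x y q where ee: "e = (p, (x, y), q)" by (cases e) auto
  have "x \<noteq> None \<and> y \<noteq> None" using l2l_edge[OF l] e ee by simp
  then show "weight e = 0 \<or> weight e = s" using ee by (auto simp: weight_def olist_def)
qed (use s in auto)

lemma l2l_len_reach: "reach T p u v q \<Longrightarrow> letter_to_letter \<Sigma> T \<Longrightarrow> length u = length v"
proof (induction rule: reach.induct)
  case (r0 q) then show ?case by simp
next
  case (rs p x y q u v r)
  then have "x \<noteq> None \<and> y \<noteq> None" using l2l_edge by metis
  then show ?case using rs by (auto simp: olist_def)
qed

lemma l2l_len: "letter_to_letter \<Sigma> T \<Longrightarrow> (u, v) \<in> rel T \<Longrightarrow> length u = length v"
  using l2l_len_reach by (auto simp: rel_reach)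




fun enc :: "nat + nat \<Rightarrow> nat" where
  "enc (Inl n) = 2 * n"
| "enc (Inr n) = 2 * n + 1"

lemma inj_enc: "inj enc"
proof (rule injI)
  fix x y :: "nat + nat" assume "enc x = enc y"
  then show "x = y" by (cases x; cases y) (auto, presburger+)
qed

definition good :: "'a set \<Rightarrow> ('a list \<times> 'a list) set \<Rightarrow> bool" where
  "good \<Sigma> R \<longleftrightarrow> (\<exists>T :: (nat, 'a) transducer. pre_td \<Sigma> T \<and> (\<exists>sg. good_sign T sg) \<and> rel T = R)"

lemma good_sum: assumes "pre_td \<Sigma> (T :: (nat + nat, 'a) transducer)" "good_sign T sg" shows "good \<Sigma> (rel T)"
  unfolding good_def
  using pre_td_rename[OF assms(1), of enc] good_sign_rename[OF inj_enc assms(2)] rel_rename[OF inj_enc, of T]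
  by blast

lemma good_empty: "good \<Sigma> {}"
proof -
  let ?T = "\<lparr>states = {}, trans = {}, init = {}, fin = {}\<rparr> :: (nat, 'a) transducer"
  have "pre_td \<Sigma> ?T" by (simp add: pre_td_def)
  moreover have "good_sign ?T (\<lambda>_. 1)" by (simp add: good_sign_def)
  moreover have "rel ?T = {}" by (simp add: rel_reach)
  ultimately show ?thesis unfolding good_def by blast
qed

lemma good_union: assumes "good \<Sigma> R1" "good \<Sigma> R2" shows "good \<Sigma> (R1 \<union> R2)"
proof -
  obtain T1 :: "(nat, 'a) transducer" and s1 where t1: "pre_td \<Sigma> T1" "good_sign T1 s1" "rel T1 = R1"
    using assms(1) unfolding good_def by blast
  obtain T2 :: "(nat, 'a) transducer" and s2 where t2: "pre_td \<Sigma> T2" "good_sign T2 s2" "rel T2 = R2"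
    using assms(2) unfolding good_def by blast
  have "good \<Sigma> (rel (tunion T1 T2))"
    by (rule good_sum[OF pre_td_tunion[OF t1(1) t2(1)] good_sign_tunion[OF t1(2) t2(2)]])
  then show ?thesis using t1 t2 rel_tunion by metis
qed

lemma good_Union: "finite P \<Longrightarrow> (\<forall>X\<in>P. good \<Sigma> X) \<Longrightarrow> good \<Sigma> (\<Union>P)"
proof (induction P rule: finite_induct)
  case empty then show ?case by (simp add: good_empty)
next
  case (insert X P) then show ?case using good_union[of \<Sigma> X "\<Union>P"] by simp
qed

lemma good_final: assumes "good \<Sigma> R"
  shows "\<exists>T :: (nat, 'a) transducer. transducer \<Sigma> T \<and> zero_avoiding T 0 \<and> rel T = R"
proof -
  obtain T :: "(nat, 'a) transducer" and sg where t: "pre_td \<Sigma> T" "good_sign T sg" "rel T = R"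
    using assms unfolding good_def by blast
  show ?thesis
  proof (cases "init T = {}")
    case False
    then show ?thesis using pre_transducer[OF t(1) False] good_sign_za[OF t(2)] t(3) by blast
  next
    case True
    then have R: "R = {}" using t(3) by (simp add: rel_reach)
    let ?T = "\<lparr>states = {0}, trans = {}, init = {0}, fin = {}\<rparr> :: (nat, 'a) transducer"
    have "transducer \<Sigma> ?T" by (simp add: transducer_def)
    moreover have "zero_avoiding ?T 0" by (rule good_sign_za[of _ "\<lambda>_. 1"]) (simp add: good_sign_def)
    moreover have "rel ?T = {}" by (simp add: rel_reach)
    ultimately show ?thesis using R by blast
  qed
qed

lemma regular_nfa: assumes "regular \<Sigma> A" "finite \<Sigma>"
  obtains N :: "bool \<Rightarrow> (nat, 'a) transducer" where
    "\<And>b. pre_td \<Sigma> (N b)" "\<And>b. good_sign (N b) (\<lambda>_. if b then 1 else -1)" "\<And>b. rel (N b) = pr b ` A"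
proof -
  obtain Q :: "nat set" and \<delta> :: "nat \<Rightarrow> 'a \<Rightarrow> nat set" and I F where q: "finite Q" "I \<subseteq> Q" "F \<subseteq> Q" "\<forall>q\<in>Q. \<forall>c\<in>\<Sigma>. \<delta> q c \<subseteq> Q"
    "A = {w. set w \<subseteq> \<Sigma> \<and> nfa_steps \<delta> I w \<inter> F \<noteq> {}}"
    using assms(1) unfolding regular_def by blast
  show ?thesis
    apply (rule that[of "\<lambda>b. nfa_td b \<Sigma> Q \<delta> I F"])
      apply (rule pre_td_nfa[OF q(1) q(4) q(2) q(3) assms(2)])
     apply (rule good_sign_nfa)
    apply (simp only: rel_nfa[OF q(4) q(2)] q(5))
    done
qed

lemma sign_cases: "(if b then 1 else -1 :: int) = 1 \<or> (if b then 1 else -1 :: int) = -1" by simp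

lemma good_left: assumes "letter_to_letter \<Sigma> (T :: (nat, 'a) transducer)" "regular \<Sigma> A" "finite \<Sigma>"
  shows "good \<Sigma> (rel_prod (rel T) (pr b ` A))"
proof -
  obtain N :: "bool \<Rightarrow> (nat, 'a) transducer" where n: "\<And>b. pre_td \<Sigma> (N b)"
    "\<And>b. good_sign (N b) (\<lambda>_. if b then 1 else -1)" "\<And>b. rel (N b) = pr b ` A"
    using regular_nfa[OF assms(2,3)] by metis
  have "good \<Sigma> (rel (tconc T (N b)))"
    apply (rule good_sum[OF pre_td_tconc[OF transducer_pre n(1)]])
     apply (use assms(1) in \<open>simp add: letter_to_letter_def\<close>)
    apply (rule good_sign_tconc[OF good_sign_l2l[OF assms(1) sign_cases] n(2) sign_cases])
    done
  then show ?thesis using rel_tconc n(3) by metis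
qed

lemma good_right: assumes "letter_to_letter \<Sigma> (T :: (nat, 'a) transducer)" "regular \<Sigma> A" "finite \<Sigma>"
  shows "good \<Sigma> (rel_prod (pr b ` A) (rel T))"
proof -
  obtain N :: "bool \<Rightarrow> (nat, 'a) transducer" where n: "\<And>b. pre_td \<Sigma> (N b)"
    "\<And>b. good_sign (N b) (\<lambda>_. if b then 1 else -1)" "\<And>b. rel (N b) = pr b ` A"
    using regular_nfa[OF assms(2,3)] by metis
  have "good \<Sigma> (rel (tconc (N b) T))"
    apply (rule good_sum[OF pre_td_tconc[OF n(1) transducer_pre]])
     apply (use assms(1) in \<open>simp add: letter_to_letter_def\<close>)
    apply (rule good_sign_tconc[OF n(2) good_sign_l2l[OF assms(1) sign_cases] sign_cases])
    done
  then show ?thesis using rel_tconc n(3) by metis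
qed

lemma left_good: assumes "left_piece \<Sigma> X" "finite \<Sigma>" shows "good \<Sigma> X"
proof -
  obtain S A where sa: "synchronous_rel \<Sigma> S" "regular \<Sigma> A"
    "X = rel_prod S (A \<times> {[]}) \<or> X = rel_prod S ({[]} \<times> A)"
    using assms(1) unfolding left_piece_def by blast
  obtain T :: "(nat, 'a) transducer" where t: "letter_to_letter \<Sigma> T" "rel T = S"
    using sa(1) unfolding synchronous_rel_def by blast
  show ?thesis using sa(3) good_left[OF t(1) sa(2) assms(2), of True] good_left[OF t(1) sa(2) assms(2), of False]
    t(2) by (auto simp: pr_True pr_False)
qed

lemma right_good: assumes "right_piece \<Sigma> X" "finite \<Sigma>" shows "good \<Sigma> X"
proof -
  obtain S A where sa: "synchronous_rel \<Sigma> S" "regular \<Sigma> A"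
    "X = rel_prod (A \<times> {[]}) S \<or> X = rel_prod ({[]} \<times> A) S"
    using assms(1) unfolding right_piece_def by blast
  obtain T :: "(nat, 'a) transducer" where t: "letter_to_letter \<Sigma> T" "rel T = S"
    using sa(1) unfolding synchronous_rel_def by blast
  show ?thesis using sa(3) good_right[OF t(1) sa(2) assms(2), of True] good_right[OF t(1) sa(2) assms(2), of False]
    t(2) by (auto simp: pr_True pr_False)
qed




definition exT :: "'a \<Rightarrow> (nat, 'a) transducer" where
  "exT a = \<lparr>states = {0, 1}, trans = {(0, (Some a, None), 1), (1, (Some a, Some a), 0)}, init = {0}, fin = {0}\<rparr>"

lemma ex_reach1: "reach (exT a) p u v q \<Longrightarrow> q = 0 \<Longrightarrow>
  (p = 0 \<longrightarrow> (\<exists>i. u = replicate (2 * i) a \<and> v = replicate i a)) \<and>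
  (p = 1 \<longrightarrow> (\<exists>i. u = a # replicate (2 * i) a \<and> v = a # replicate i a))"
proof (induction rule: reach.induct)
  case (r0 q) then show ?case by (auto intro: exI[of _ 0])
next
  case (rs p x y q u v r)
  from rs(1) have "(p = 0 \<and> x = Some a \<and> y = None \<and> q = 1) \<or> (p = 1 \<and> x = Some a \<and> y = Some a \<and> q = 0)"
    by (auto simp: exT_def)
  then show ?case
  proof
    assume h: "p = 0 \<and> x = Some a \<and> y = None \<and> q = 1"
    then obtain i where i: "u = a # replicate (2 * i) a" "v = a # replicate i a" using rs(3) rs(4) by auto
    have "olist x @ u = replicate (2 * Suc i) a" "olist y @ v = replicate (Suc i) a"
      using h i by (simp_all add: olist_def)
    then have "\<exists>i. olist x @ u = replicate (2 * i) a \<and> olist y @ v = replicate i a" by blast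
    then show ?thesis using h by simp
  next
    assume h: "p = 1 \<and> x = Some a \<and> y = Some a \<and> q = 0"
    then obtain i where i: "u = replicate (2 * i) a" "v = replicate i a" using rs(3) rs(4) by auto
    have "olist x @ u = a # replicate (2 * i) a" "olist y @ v = a # replicate i a"
      using h i by (simp_all add: olist_def)
    then show ?thesis using h by auto
  qed
qed

lemma ex_reach2: "reach (exT a) 0 (replicate (2 * i) a) (replicate i a) 0"
proof (induction i)
  case 0 then show ?case by (simp add: reach.r0)
next
  case (Suc i)
  have e1: "(1, (Some a, Some a), 0) \<in> trans (exT a)" by (simp add: exT_def)
  have e0: "(0, (Some a, None), 1) \<in> trans (exT a)" by (simp add: exT_def)
  have "reach (exT a) 1 (olist (Some a) @ replicate (2 * i) a) (olist (Some a) @ replicate i a) 0"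
    by (rule reach.rs[OF e1 Suc])
  then have "reach (exT a) 0 (olist (Some a) @ olist (Some a) @ replicate (2 * i) a) (olist None @ olist (Some a) @ replicate i a) 0"
    by (rule reach.rs[OF e0])
  then show ?case by (simp add: olist_def)
qed

lemma rel_exT: "rel (exT a) = {(replicate (2 * i) a, replicate i a) | i. True}"
proof (intro set_eqI iffI)
  fix z assume "z \<in> rel (exT a)"
  then obtain u v where "z = (u, v)" "reach (exT a) 0 u v 0" by (auto simp: rel_reach exT_def)
  moreover obtain i where "u = replicate (2 * i) a" "v = replicate i a"
    using ex_reach1[OF calculation(2) refl] by auto
  ultimately show "z \<in> {(replicate (2 * i) a, replicate i a) | i. True}" by blast
next
  fix z assume "z \<in> {(replicate (2 * i) a, replicate i a) | i. True}"
  then obtain i where "z = (replicate (2 * i) a, replicate i a)" by blast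
  then show "z \<in> rel (exT a)" using ex_reach2[of a i] by (auto simp: rel_reach exT_def)
qed

lemma ex_good: assumes "a \<in> \<Sigma>"
  shows "\<exists>T :: (nat, 'a) transducer. transducer \<Sigma> T \<and> zero_avoiding T 0 \<and>
                rel T = {(replicate (2 * i) a, replicate i a) | i. True}"
proof -
  have "transducer \<Sigma> (exT a)" using assms unfolding transducer_def exT_def by simp
  moreover have "good_sign (exT a) (\<lambda>_. 1)"
    unfolding good_sign_def exT_def by (simp add: weight_def olist_def src_def tgt_def)
  ultimately show ?thesis using good_sign_za[of "exT a" "\<lambda>_. 1" 0] rel_exT[of a] by blast
qed

definition lenR :: "('a list \<times> 'a list) set \<Rightarrow> bool" where
  "lenR X \<longleftrightarrow> (\<forall>u v. (u, v) \<in> X \<longrightarrow> length u = 2 * length v)"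
definition lp :: "('a list \<times> 'a list) set \<Rightarrow> bool" where
  "lp S \<longleftrightarrow> (\<forall>u v. (u, v) \<in> S \<longrightarrow> length u = length v)"

lemma rel_prod_E: assumes "(u, v) \<in> rel_prod R1 R2"
  obtains u1 v1 u2 v2 where "u = u1 @ u2" "v = v1 @ v2" "(u1, v1) \<in> R1" "(u2, v2) \<in> R2"
  using assms unfolding rel_prod_def by blast

lemma rel_prod_I: "(u1, v1) \<in> R1 \<Longrightarrow> (u2, v2) \<in> R2 \<Longrightarrow> (u1 @ u2, v1 @ v2) \<in> rel_prod R1 R2"
  unfolding rel_prod_def by blast

lemma piece_l1: assumes "lp S" "lenR X" "X = rel_prod S (A \<times> {[]})" "(u, v) \<in> X" "(u', v') \<in> X"
  shows "length v = length v'"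
proof -
  obtain u1 v1 u2 v2 where a: "u = u1 @ u2" "v = v1 @ v2" "(u1, v1) \<in> S" "(u2, v2) \<in> A \<times> {[]}"
    using assms(3,4) rel_prod_E by metis
  obtain u1' v1' u2' v2' where b: "u' = u1' @ u2'" "v' = v1' @ v2'" "(u1', v1') \<in> S" "(u2', v2') \<in> A \<times> {[]}"
    using assms(3,5) rel_prod_E by metis
  have c: "(u1 @ u2', v1 @ v2') \<in> X" using a(3) b(4) assms(3) rel_prod_I by metis
  have "length u = 2 * length v" "length u' = 2 * length v'" "length (u1 @ u2') = 2 * length (v1 @ v2')"
    using assms(2,4,5) c unfolding lenR_def by blast+
  moreover have "length u1 = length v1" "length u1' = length v1'" using assms(1) a b unfolding lp_def by blast+
  ultimately show ?thesis using a b by simp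
qed

lemma piece_l2: assumes "lp S" "lenR X" "X = rel_prod S ({[]} \<times> A)" "(u, v) \<in> X"
  shows "length v = 0"
proof -
  obtain u1 v1 u2 v2 where a: "u = u1 @ u2" "v = v1 @ v2" "(u1, v1) \<in> S" "(u2, v2) \<in> {[]} \<times> A"
    using assms(3,4) rel_prod_E by metis
  have "length u = 2 * length v" using assms(2,4) unfolding lenR_def by blast
  moreover have "length u1 = length v1" using assms(1) a unfolding lp_def by blast
  ultimately show ?thesis using a by simp
qed

lemma piece_r1: assumes "lp S" "lenR X" "X = rel_prod (A \<times> {[]}) S" "(u, v) \<in> X" "(u', v') \<in> X"
  shows "length v = length v'"
proof -
  obtain u1 v1 u2 v2 where a: "u = u1 @ u2" "v = v1 @ v2" "(u1, v1) \<in> A \<times> {[]}" "(u2, v2) \<in> S"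
    using assms(3,4) rel_prod_E by metis
  obtain u1' v1' u2' v2' where b: "u' = u1' @ u2'" "v' = v1' @ v2'" "(u1', v1') \<in> A \<times> {[]}" "(u2', v2') \<in> S"
    using assms(3,5) rel_prod_E by metis
  have c: "(u1' @ u2, v1' @ v2) \<in> X" using a(4) b(3) assms(3) rel_prod_I by metis
  have "length u = 2 * length v" "length u' = 2 * length v'" "length (u1' @ u2) = 2 * length (v1' @ v2)"
    using assms(2,4,5) c unfolding lenR_def by blast+
  moreover have "length u2 = length v2" "length u2' = length v2'" using assms(1) a b unfolding lp_def by blast+
  ultimately show ?thesis using a b by simp
qed

lemma piece_r2: assumes "lp S" "lenR X" "X = rel_prod ({[]} \<times> A) S" "(u, v) \<in> X"
  shows "length v = 0"
proof -
  obtain u1 v1 u2 v2 where a: "u = u1 @ u2" "v = v1 @ v2" "(u1, v1) \<in> {[]} \<times> A" "(u2, v2) \<in> S"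
    using assms(3,4) rel_prod_E by metis
  have "length u = 2 * length v" using assms(2,4) unfolding lenR_def by blast
  moreover have "length u2 = length v2" using assms(1) a unfolding lp_def by blast
  ultimately show ?thesis using a by simp
qed

lemma sync_lp: "synchronous_rel \<Sigma> S \<Longrightarrow> lp S"
  unfolding synchronous_rel_def lp_def using l2l_len by blast

lemma R0_lenR: "X \<subseteq> {(replicate (2 * i) a, replicate i a) | i. True} \<Longrightarrow> lenR X"
  unfolding lenR_def by auto

lemma not_union_R0:
  assumes fin: "finite P" and R: "{(replicate (2 * i) a, replicate i a) | i. True} = \<Union>P"
    and pc: "\<forall>X\<in>P. \<forall>u v u' v'. (u, v) \<in> X \<longrightarrow> (u', v') \<in> X \<longrightarrow> length v = length v'"
  shows False
proof -
  define f where "f = (\<lambda>i::nat. (replicate (2 * i) a, replicate i a))"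
  have inj: "inj f" unfolding f_def by (rule injI) (metis length_replicate snd_conv)
  have Rf: "range f = \<Union>P" using R unfolding f_def by auto
  have "finite (X \<inter> range f)" if X: "X \<in> P" for X
  proof -
    have "\<forall>z1\<in>X \<inter> range f. \<forall>z2\<in>X \<inter> range f. z1 = z2"
    proof (intro ballI)
      fix z1 z2 assume z: "z1 \<in> X \<inter> range f" "z2 \<in> X \<inter> range f"
      then obtain i j where ij: "z1 = f i" "z2 = f j" by blast
      have "length (snd z1) = length (snd z2)" using pc X z by (metis IntD1 prod.collapse)
      then have "i = j" using ij unfolding f_def by simp
      then show "z1 = z2" using ij by simp
    qed
    then have "X \<inter> range f = {} \<or> (\<exists>z. X \<inter> range f = {z})" by blast
    then show ?thesis by auto
  qed
  then have "finite (\<Union>X\<in>P. X \<inter> range f)" using fin by blast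
  moreover have "(\<Union>X\<in>P. X \<inter> range f) = range f" using Rf by blast
  ultimately have "finite (range f)" by simp
  then show False using inj finite_imageD[of f UNIV] by (simp add: inj_on_def)
qed

lemma not_left: "\<not> left_synchronous \<Sigma> {(replicate (2 * i) a, replicate i a) | i. True}"
proof
  assume "left_synchronous \<Sigma> {(replicate (2 * i) a, replicate i a) | i. True}"
  then obtain P where P: "finite P" "\<forall>X\<in>P. left_piece \<Sigma> X" "{(replicate (2 * i) a, replicate i a) | i. True} = \<Union>P"
    unfolding left_synchronous_def by blast
  have "\<forall>X\<in>P. \<forall>u v u' v'. (u, v) \<in> X \<longrightarrow> (u', v') \<in> X \<longrightarrow> length v = length v'"
  proof (intro ballI allI impI)
    fix X u v u' v' assume X: "X \<in> P" and z: "(u, v) \<in> X" "(u', v') \<in> X"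
    have lx: "lenR X" using R0_lenR[of X a] P(3) X by blast
    obtain S A where sa: "synchronous_rel \<Sigma> S" "X = rel_prod S (A \<times> {[]}) \<or> X = rel_prod S ({[]} \<times> A)"
      using P(2) X unfolding left_piece_def by blast
    have l: "lp S" using sync_lp[OF sa(1)] .
    from sa(2) show "length v = length v'"
    proof
      assume "X = rel_prod S (A \<times> {[]})" then show ?thesis using piece_l1[OF l lx _ z] by blast
    next
      assume h: "X = rel_prod S ({[]} \<times> A)"
      show ?thesis using piece_l2[OF l lx h z(1)] piece_l2[OF l lx h z(2)] by simp
    qed
  qed
  then show False using not_union_R0[OF P(1) P(3)] by blast
qed

lemma not_right: "\<not> right_synchronous \<Sigma> {(replicate (2 * i) a, replicate i a) | i. True}"
proof
  assume "right_synchronous \<Sigma> {(replicate (2 * i) a, replicate i a) | i. True}"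
  then obtain P where P: "finite P" "\<forall>X\<in>P. right_piece \<Sigma> X" "{(replicate (2 * i) a, replicate i a) | i. True} = \<Union>P"
    unfolding right_synchronous_def by blast
  have "\<forall>X\<in>P. \<forall>u v u' v'. (u, v) \<in> X \<longrightarrow> (u', v') \<in> X \<longrightarrow> length v = length v'"
  proof (intro ballI allI impI)
    fix X u v u' v' assume X: "X \<in> P" and z: "(u, v) \<in> X" "(u', v') \<in> X"
    have lx: "lenR X" using R0_lenR[of X a] P(3) X by blast
    obtain S A where sa: "synchronous_rel \<Sigma> S" "X = rel_prod (A \<times> {[]}) S \<or> X = rel_prod ({[]} \<times> A) S"
      using P(2) X unfolding right_piece_def by blast
    have l: "lp S" using sync_lp[OF sa(1)] .
    from sa(2) show "length v = length v'"
    proof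
      assume "X = rel_prod (A \<times> {[]}) S" then show ?thesis using piece_r1[OF l lx _ z] by blast
    next
      assume h: "X = rel_prod ({[]} \<times> A) S"
      show ?thesis using piece_r2[OF l lx h z(1)] piece_r2[OF l lx h z(2)] by simp
    qed
  qed
  then show False using not_union_R0[OF P(1) P(3)] by blast
qed

theorem proposition4:
  fixes \<Sigma> :: "'a set"
  assumes "finite \<Sigma>"
  shows "(\<forall>R. left_synchronous \<Sigma> R \<longrightarrow>
            (\<exists>T :: (nat, 'a) transducer. transducer \<Sigma> T \<and> zero_avoiding T 0 \<and> rel T = R))
       \<and> (\<forall>R. right_synchronous \<Sigma> R \<longrightarrow>
            (\<exists>T :: (nat, 'a) transducer. transducer \<Sigma> T \<and> zero_avoiding T 0 \<and> rel T = R))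
       \<and> (\<forall>a\<in>\<Sigma>.
            (\<exists>T :: (nat, 'a) transducer. transducer \<Sigma> T \<and> zero_avoiding T 0 \<and>
                rel T = {(replicate (2 * i) a, replicate i a) | i. True})
          \<and> \<not> left_synchronous \<Sigma> {(replicate (2 * i) a, replicate i a) | i. True}
          \<and> \<not> right_synchronous \<Sigma> {(replicate (2 * i) a, replicate i a) | i. True})"
proof (intro conjI allI impI ballI)
  fix R assume "left_synchronous \<Sigma> R"
  then obtain P where P: "finite P" "\<forall>X\<in>P. left_piece \<Sigma> X" "R = \<Union>P"
    unfolding left_synchronous_def by blast
  have "good \<Sigma> R" using good_Union[OF P(1)] P(2,3) left_good[OF _ assms] by blast
  then show "\<exists>T :: (nat, 'a) transducer. transducer \<Sigma> T \<and> zero_avoiding T 0 \<and> rel T = R" by (rule good_final)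
next
  fix R assume "right_synchronous \<Sigma> R"
  then obtain P where P: "finite P" "\<forall>X\<in>P. right_piece \<Sigma> X" "R = \<Union>P"
    unfolding right_synchronous_def by blast
  have "good \<Sigma> R" using good_Union[OF P(1)] P(2,3) right_good[OF _ assms] by blast
  then show "\<exists>T :: (nat, 'a) transducer. transducer \<Sigma> T \<and> zero_avoiding T 0 \<and> rel T = R" by (rule good_final)
next
  fix a assume "a \<in> \<Sigma>"
  then show "\<exists>T :: (nat, 'a) transducer. transducer \<Sigma> T \<and> zero_avoiding T 0 \<and>
                rel T = {(replicate (2 * i) a, replicate i a) | i. True}" by (rule ex_good)
next
  fix a show "\<not> left_synchronous \<Sigma> {(replicate (2 * i) a, replicate i a) | i. True}" by (rule not_left)
next
  fix a show "\<not> right_synchronous \<Sigma> {(replicate (2 * i) a, replicate i a) | i. True}" by (rule not_right)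
qed


end
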